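(* Let $G$ be a connected graph of order $n\geq 2$ and let $H$ be a graph with $k\geq 1$ connected components $H_1,\dots,H_k$. Let $c$ be a locating coloring of $G\odot H$. Then for every $u\in V(G)$ and every $t\in\{1,\dots,k\}$, the vertices of $H_t(u)$ receive at least $\chi_L(H_t+K_1)-1$ distinct colors under $c$, i.e. $H_t(u)$ meets at least $\chi_L(H_t+K_1)-1$ color classes of $c$.
   Context: All graphs are finite and simple. A $k$-coloring of a connected graph $G$ is a map $c:V(G)\to\{1,\dots,k\}$ with $c(u)\neq c(v)$ for adjacent $u,v$; it induces the partition $\Pi=\{C_1,\dots,C_k\}$ into color classes $C_i=c^{-1}(i)$. The color code of $v$ is $c_\Pi(v)=(d(v,C_1),\dots,d(v,C_k))$ with $d(v,C_i)=\min\{d(v,x): x\in C_i\}$ (graph distance). $c$ is a locating coloring if distinct vertices have distinct color codes; the locating-chromatic number $\chi_L(G)$ is the least $k$ for which a locating $k$-coloring exists. The corona product $G\odot H$ of a graph $G$ with vertex set $\{a_1,\dots,a_n\}$ and a graph $H$ is obtained from one copy of $G$ and $n$ disjoint copies of $H$ by joining $a_i$ to every vertex of the $i$-th copy of $H$. Write $(u)$ for the vertex of $G\odot H$ corresponding to $u\in V(G)$ and $(u,v)$, $v\in V(H)$, for the vertices of the copy of $H$ attached to $(u)$; $H(u)=\{(u,v):v\in V(H)\}$ and $H_t(u)=\{(u,v): v\in V(H_t)\}$. For a graph $F$, $F+K_1$ denotes the join of $F$ with a single new vertex adjacent to all vertices of $F$. *)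

theory Defs
  imports Main
begin

definition graph :: "'a set \<Rightarrow> ('a \<Rightarrow> 'a \<Rightarrow> bool) \<Rightarrow> bool" where
  "graph V E \<longleftrightarrow> finite V \<and> (\<forall>x y. E x y \<longrightarrow> x \<in> V \<and> y \<in> V)
     \<and> (\<forall>x y. E x y \<longrightarrow> E y x) \<and> (\<forall>x. \<not> E x x)"

definition connected_graph :: "'a set \<Rightarrow> ('a \<Rightarrow> 'a \<Rightarrow> bool) \<Rightarrow> bool" where
  "connected_graph V E \<longleftrightarrow> graph V E \<and> V \<noteq> {} \<and> (\<forall>x\<in>V. \<forall>y\<in>V. E\<^sup>*\<^sup>* x y)"

definition gdist :: "('a \<Rightarrow> 'a \<Rightarrow> bool) \<Rightarrow> 'a \<Rightarrow> 'a \<Rightarrow> nat" where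
  "gdist E x y = (LEAST n. (E ^^ n) x y)"

definition setdist :: "('a \<Rightarrow> 'a \<Rightarrow> bool) \<Rightarrow> 'a \<Rightarrow> 'a set \<Rightarrow> nat" where
  "setdist E v C = Min ((\<lambda>x. gdist E v x) ` C)"

definition color_code :: "'a set \<Rightarrow> ('a \<Rightarrow> 'a \<Rightarrow> bool) \<Rightarrow> nat \<Rightarrow> ('a \<Rightarrow> nat) \<Rightarrow> 'a \<Rightarrow> nat list" where
  "color_code V E k c v = map (\<lambda>i. setdist E v {x \<in> V. c x = i}) [1..<k+1]"

definition locating_coloring :: "'a set \<Rightarrow> ('a \<Rightarrow> 'a \<Rightarrow> bool) \<Rightarrow> nat \<Rightarrow> ('a \<Rightarrow> nat) \<Rightarrow> bool" where
  "locating_coloring V E k c \<longleftrightarrow> c ` V = {1..k} \<and> (\<forall>x y. E x y \<longrightarrow> c x \<noteq> c y)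
     \<and> inj_on (color_code V E k c) V"

definition locating_chromatic_number :: "'a set \<Rightarrow> ('a \<Rightarrow> 'a \<Rightarrow> bool) \<Rightarrow> nat" where
  "locating_chromatic_number V E = (LEAST k. \<exists>c. locating_coloring V E k c)"

text \<open>Corona product G \<odot> H: vertex (u) is Inl u, vertex (u,v) is Inr (u,v).\<close>
definition corona_V :: "'a set \<Rightarrow> 'b set \<Rightarrow> ('a + 'a \<times> 'b) set" where
  "corona_V VG VH = Inl ` VG \<union> Inr ` (VG \<times> VH)"

fun corona_E :: "'a set \<Rightarrow> ('a \<Rightarrow> 'a \<Rightarrow> bool) \<Rightarrow> 'b set \<Rightarrow> ('b \<Rightarrow> 'b \<Rightarrow> bool)
    \<Rightarrow> ('a + 'a \<times> 'b) \<Rightarrow> ('a + 'a \<times> 'b) \<Rightarrow> bool" where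
  "corona_E VG EG VH EH (Inl a) (Inl b) = EG a b"
| "corona_E VG EG VH EH (Inr (a, x)) (Inr (b, y)) = (a = b \<and> a \<in> VG \<and> EH x y)"
| "corona_E VG EG VH EH (Inl a) (Inr (b, y)) = (a = b \<and> a \<in> VG \<and> y \<in> VH)"
| "corona_E VG EG VH EH (Inr (b, y)) (Inl a) = (a = b \<and> a \<in> VG \<and> y \<in> VH)"

text \<open>Join F + K_1: the new vertex is None.\<close>
definition join_K1_V :: "'b set \<Rightarrow> 'b option set" where
  "join_K1_V V = insert None (Some ` V)"

fun join_K1_E :: "'b set \<Rightarrow> ('b \<Rightarrow> 'b \<Rightarrow> bool) \<Rightarrow> 'b option \<Rightarrow> 'b option \<Rightarrow> bool" where
  "join_K1_E V E (Some x) (Some y) = E x y"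
| "join_K1_E V E None (Some y) = (y \<in> V)"
| "join_K1_E V E (Some x) None = (x \<in> V)"
| "join_K1_E V E None None = False"

definition components :: "'b set \<Rightarrow> ('b \<Rightarrow> 'b \<Rightarrow> bool) \<Rightarrow> 'b set set" where
  "components V E = {{y \<in> V. E\<^sup>*\<^sup>* x y} | x. x \<in> V}"

definition induced_E :: "'b set \<Rightarrow> ('b \<Rightarrow> 'b \<Rightarrow> bool) \<Rightarrow> 'b \<Rightarrow> 'b \<Rightarrow> bool" where
  "induced_E C E x y \<longleftrightarrow> E x y \<and> x \<in> C \<and> y \<in> C"

end

theory Submission imports Defs begin

lemma gdist_refl: "gdist R a a = 0"
  unfolding gdist_def by (rule Least_equality) auto

lemma gdist_one: "a \<noteq> b \<Longrightarrow> R a b \<Longrightarrow> gdist R a b = 1"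
  unfolding gdist_def
  apply (rule Least_equality)
   apply (auto simp: relcompp_apply)[1]
  by (case_tac y) auto

lemma gdist_two: "a \<noteq> b \<Longrightarrow> \<not> R a b \<Longrightarrow> R a z \<Longrightarrow> R z b \<Longrightarrow> gdist R a b = 2"
  unfolding gdist_def
proof (rule Least_equality)
  assume "R a z" "R z b" thus "(R ^^ 2) a b" by (auto simp: numeral_2_eq_2 relcompp_apply)
next
  fix y assume "a \<noteq> b" "\<not> R a b" "(R ^^ y) a b"
  thus "2 \<le> y"
    by (cases y; cases "y - 1"; auto)
qed

lemma exit_lemma:
  assumes X: "\<And>a b. a \<in> X \<Longrightarrow> R a b \<Longrightarrow> b \<in> X \<or> b = p"
  shows "\<forall>a. (R ^^ n) a w \<longrightarrow> a \<in> X \<longrightarrow> w \<notin> X \<longrightarrow> (\<exists>k<n. (R ^^ k) p w)"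
proof (induction n)
  case 0 thus ?case by auto
next
  case (Suc n)
  show ?case
  proof (intro allI impI)
    fix a assume a: "(R ^^ Suc n) a w" "a \<in> X" "w \<notin> X"
    from relpowp_Suc_D2[OF a(1)] obtain b where b: "R a b" "(R ^^ n) b w" by blast
    from X[OF a(2) b(1)] show "\<exists>k<Suc n. (R ^^ k) p w"
    proof
      assume "b \<in> X"
      then obtain k where "k < n" "(R ^^ k) p w" using Suc.IH b(2) a(3) by blast
      thus ?thesis using less_SucI by blast
    next
      assume "b = p" thus ?thesis using b by blast
    qed
  qed
qed

lemma gdist_exit:
  assumes hX: "\<And>a b. a \<in> X \<Longrightarrow> R a b \<Longrightarrow> b \<in> X \<or> b = p"
    and "a \<in> X" "w \<notin> X" "R a p" "\<exists>n. (R ^^ n) p w"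
  shows "gdist R a w = Suc (gdist R p w)"
proof -
  have pw: "(R ^^ gdist R p w) p w" unfolding gdist_def using assms(5) by (meson LeastI)
  have aw: "(R ^^ Suc (gdist R p w)) a w" by (rule relpowp_Suc_I2[OF assms(4) pw])
  hence le: "gdist R a w \<le> Suc (gdist R p w)" unfolding gdist_def by (rule Least_le)
  have aw2: "(R ^^ gdist R a w) a w" unfolding gdist_def by (rule LeastI[of "\<lambda>n. (R ^^ n) a w", OF aw])
  define n0 where "n0 = gdist R a w"
  have ex: "\<forall>a'. (R ^^ n0) a' w \<longrightarrow> a' \<in> X \<longrightarrow> w \<notin> X \<longrightarrow> (\<exists>k<n0. (R ^^ k) p w)"
    apply (rule exit_lemma) using hX by blast
  have "\<exists>k<gdist R a w. (R ^^ k) p w" using ex aw2 assms(2,3) unfolding n0_def by blast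
  then obtain k where k1: "k < gdist R a w" and k2: "(R ^^ k) p w" by blast
  have "gdist R p w \<le> k" unfolding gdist_def by (rule Least_le[of "\<lambda>n. (R ^^ n) p w", OF k2])
  thus ?thesis using le k1 by linarith
qed

lemma Min_eq_dom:
  fixes f g :: "'x \<Rightarrow> nat"
  assumes "finite A" "finite B" "A \<noteq> {}" "B \<noteq> {}"
    "\<And>a. a \<in> A \<Longrightarrow> \<exists>b\<in>B. g b \<le> f a" "\<And>b. b \<in> B \<Longrightarrow> \<exists>a\<in>A. f a \<le> g b"
  shows "Min (f ` A) = Min (g ` B)"
proof (rule antisym)
  obtain b where b: "b \<in> B" "g b = Min (g ` B)" using assms
    by (metis (mono_tags, lifting) Min_in finite_imageI image_iff image_is_empty)
  obtain a where "a\<in>A" "f a \<le> g b" using assms(6) b by blast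
  thus "Min (f ` A) \<le> Min (g ` B)" using b assms(1) by (metis Min_le finite_imageI image_eqI order_trans)
  obtain a where a: "a \<in> A" "f a = Min (f ` A)" using assms
    by (metis (mono_tags, lifting) Min_in finite_imageI image_iff image_is_empty)
  obtain b where "b\<in>B" "g b \<le> f a" using assms(5) a by blast
  thus "Min (g ` B) \<le> Min (f ` A)" using a assms(2) by (metis Min_le finite_imageI image_eqI order_trans)
qed


lemma code_eq_iff:
  "color_code V E k c x = color_code V E k c y \<longleftrightarrow>
     (\<forall>i. 1 \<le> i \<and> i \<le> k \<longrightarrow> setdist E x {z \<in> V. c z = i} = setdist E y {z \<in> V. c z = i})"
  unfolding color_code_def map_eq_conv by auto

theorem lemma2:
  fixes VG :: "'a set" and EG :: "'a \<Rightarrow> 'a \<Rightarrow> bool"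
    and VH :: "'b set" and EH :: "'b \<Rightarrow> 'b \<Rightarrow> bool"
    and c :: "('a + 'a \<times> 'b) \<Rightarrow> nat" and m :: nat
  assumes "connected_graph VG EG" and "card VG \<ge> 2"
    and "graph VH EH" and "VH \<noteq> {}"
    and "locating_coloring (corona_V VG VH) (corona_E VG EG VH EH) m c"
    and "u \<in> VG" and "Ht \<in> components VH EH"
  shows "card (c ` (Inr ` ({u} \<times> Ht)))
           \<ge> locating_chromatic_number (join_K1_V Ht) (join_K1_E Ht (induced_E Ht EH)) - 1"
proof -
  let ?E = "corona_E VG EG VH EH" and ?V = "corona_V VG VH"
  define X where "X = (Inr ` ({u} \<times> Ht) :: ('a + 'a \<times> 'b) set)"
  define p where "p = (Inl u :: 'a + 'a \<times> 'b)"
  have finG: "finite VG" and connG: "\<forall>x\<in>VG. \<forall>y\<in>VG. EG\<^sup>*\<^sup>* x y"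
    using assms(1) unfolding connected_graph_def graph_def by auto
  have finH: "finite VH" and gH1: "\<And>x y. EH x y \<Longrightarrow> x \<in> VH \<and> y \<in> VH"
    and gH2: "\<And>x y. EH x y \<Longrightarrow> EH y x" and gH3: "\<And>x. \<not> EH x x"
    using assms(3) unfolding graph_def by auto
  obtain x0 where x0: "x0 \<in> VH" "Ht = {y \<in> VH. EH\<^sup>*\<^sup>* x0 y}"
    using assms(7) unfolding components_def by auto
  have HtV: "Ht \<subseteq> VH" using x0 by auto
  have Htclosed: "\<And>x y. x \<in> Ht \<Longrightarrow> EH x y \<Longrightarrow> y \<in> Ht"
    using x0 gH1 by (auto intro: rtranclp.rtrancl_into_rtrancl)
  have finV: "finite ?V" unfolding corona_V_def using finG finH by auto
  have loc1: "c ` ?V = {1..m}" and loc2: "\<And>x y. ?E x y \<Longrightarrow> c x \<noteq> c y"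
    and loc3: "inj_on (color_code ?V ?E m c) ?V"
    using assms(5) unfolding locating_coloring_def by auto
  have liftG: "?E\<^sup>*\<^sup>* (Inl u) (Inl a)" if "EG\<^sup>*\<^sup>* u a" for a
    using that
  proof (induction rule: rtranclp_induct)
    case base thus ?case by simp
  next
    case (step b d) thus ?case by (metis rtranclp.rtrancl_into_rtrancl corona_E.simps(1))
  qed
  have reach: "\<exists>n. (?E ^^ n) p w" if "w \<in> ?V" for w
  proof -
    have "?E\<^sup>*\<^sup>* p w"
    proof (cases w)
      case (Inl a)
      thus ?thesis using that liftG connG assms(6) unfolding corona_V_def p_def by auto
    next
      case (Inr q)
      then obtain a y where q: "w = Inr (a, y)" "a \<in> VG" "y \<in> VH"
        using \<open>w \<in> ?V\<close> Inr unfolding corona_V_def by blast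
      have "?E\<^sup>*\<^sup>* p (Inl a)" using liftG connG assms(6) q unfolding p_def by auto
      moreover have "?E (Inl a) w" using q by simp
      ultimately show ?thesis by (rule rtranclp.rtrancl_into_rtrancl)
    qed
    thus ?thesis by (rule rtranclp_imp_relpowp)
  qed
  have Xout: "b \<in> X \<or> b = p" if aX: "a \<in> X" and that: "?E a b" for a b
  proof -
    obtain x where x: "a = Inr (u, x)" "x \<in> Ht" using aX unfolding X_def by auto
    show ?thesis
    proof (cases b)
      case (Inl a') thus ?thesis using that x unfolding p_def by auto
    next
      case (Inr q)
      then obtain a' y where "b = Inr (a', y)" by (cases q) auto
      thus ?thesis using that x Htclosed unfolding X_def by auto
    qed
  qed
  define f where "f = (\<lambda>x w. if x = w then 0 else if EH x w then 1 else (2::nat))"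
  have dX: "gdist ?E (Inr (u, x)) (Inr (u, w)) = f x w" if "x \<in> Ht" "w \<in> Ht" for x w
  proof -
    consider "x = w" | "x \<noteq> w" "EH x w" | "x \<noteq> w" "\<not> EH x w" by blast
    thus ?thesis
    proof cases
      case 1 thus ?thesis by (simp add: f_def gdist_refl)
    next
      case 2 thus ?thesis using assms(6) by (simp add: f_def gdist_one)
    next
      case 3
      have "gdist ?E (Inr (u, x)) (Inr (u, w)) = 2"
        by (rule gdist_two[where z = "Inl u"]) (use 3 assms(6) that HtV in auto)
      thus ?thesis using 3 by (simp add: f_def)
    qed
  qed
  have dOut: "gdist ?E (Inr (u, x)) w = Suc (gdist ?E p w)" if "x \<in> Ht" "w \<in> ?V" "w \<notin> X" for x w
    by (rule gdist_exit[where X = X]) (use Xout that reach HtV assms(6) in \<open>auto simp: X_def p_def\<close>)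
  define S where "S = c ` X"
  define r where "r = card S"
  have finHt: "finite Ht" using finH HtV finite_subset by blast
  have finS: "finite S" unfolding S_def X_def using finHt by simp
  have "\<exists>h. bij_betw h S {1..r}"
    by (rule finite_same_card_bij[OF finS]) (simp_all add: r_def)
  then obtain h where h: "bij_betw h S {1..r}" by blast
  have hinj: "inj_on h S" and himg: "h ` S = {1..r}" using h by (auto simp: bij_betw_def)
  define c' where "c' = (\<lambda>z. case z of None \<Rightarrow> r + 1 | Some x \<Rightarrow> h (c (Inr (u, x))))"
  let ?EJ = "join_K1_E Ht (induced_E Ht EH)" and ?VJ = "join_K1_V Ht"
  have dJ: "gdist ?EJ (Some x) (Some w) = f x w" if "x \<in> Ht" "w \<in> Ht" for x w
  proof -
    consider "x = w" | "x \<noteq> w" "EH x w" | "x \<noteq> w" "\<not> EH x w" by blast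
    thus ?thesis
    proof cases
      case 1 thus ?thesis by (simp add: f_def gdist_refl)
    next
      case 2 thus ?thesis using that by (simp add: f_def gdist_one induced_E_def)
    next
      case 3
      have "gdist ?EJ (Some x) (Some w) = 2"
        by (rule gdist_two[where z = None]) (use 3 that in \<open>auto simp: induced_E_def\<close>)
      thus ?thesis using 3 by (simp add: f_def)
    qed
  qed
  have dJN: "gdist ?EJ (Some x) None = 1" if "x \<in> Ht" for x
    by (rule gdist_one) (use that in auto)
  have cX: "c (Inr (u, x)) \<in> S" if "x \<in> Ht" for x
    using that unfolding S_def X_def by auto
  have c'le: "c' (Some x) \<in> {1..r}" if "x \<in> Ht" for x
    using cX[OF that] himg unfolding c'_def by auto
  have VJ: "?VJ = insert None (Some ` Ht)" by (simp add: join_K1_V_def)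
  have "locating_coloring ?VJ ?EJ (r + 1) c'"
    unfolding locating_coloring_def
  proof (intro conjI allI impI)
    have "c' ` (Some ` Ht) = h ` S" unfolding S_def X_def c'_def by (auto simp: image_image)
    thus "c' ` ?VJ = {1..r + 1}" using himg VJ by (auto simp: c'_def)
  next
    fix x y assume e: "?EJ x y"
    show "c' x \<noteq> c' y"
    proof (cases x; cases y)
      fix a b assume ab: "x = Some a" "y = Some b"
      hence "EH a b" "a \<in> Ht" "b \<in> Ht" using e by (auto simp: induced_E_def)
      hence "c (Inr (u, a)) \<noteq> c (Inr (u, b))" using loc2 assms(6) by auto
      thus ?thesis using ab hinj cX \<open>a \<in> Ht\<close> \<open>b \<in> Ht\<close> unfolding c'_def by (auto dest: inj_onD)
    qed (use e c'le in \<open>fastforce simp: c'_def\<close>)+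
  next
    define A where "A = (\<lambda>i. {w \<in> Ht. c (Inr (u, w)) = i})"
    define C where "C = (\<lambda>i. {z \<in> ?V. c z = i})"
    have finA: "finite (A i)" for i using finHt unfolding A_def by auto
    have dom: "\<exists>w'\<in>C i. gdist ?E (Inr (u, b)) w' \<le> gdist ?E (Inr (u, a)) w"
      if ab: "a \<in> Ht" "b \<in> Ht" and hyp: "\<And>i. i \<in> S \<Longrightarrow> Min (f a ` A i) = Min (f b ` A i)"
        and w: "w \<in> C i" for a b i w
    proof (cases "w \<in> X")
      case False
      have "w \<in> ?V" using w unfolding C_def by auto
      hence "gdist ?E (Inr (u, b)) w \<le> gdist ?E (Inr (u, a)) w" using dOut False ab by simp
      thus ?thesis using w by blast
    next
      case True
      then obtain z where z: "w = Inr (u, z)" "z \<in> Ht" unfolding X_def by auto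
      have iS: "i \<in> S" using w True unfolding C_def S_def by auto
      have zA: "z \<in> A i" using z w unfolding A_def C_def by auto
      have "Min (f b ` A i) \<in> f b ` A i" using finA zA by (intro Min_in) auto
      then obtain z' where z': "z' \<in> A i" "f b z' = Min (f b ` A i)" by auto
      have "f a z \<ge> Min (f a ` A i)" using finA zA by (intro Min_le) auto
      hence le: "f b z' \<le> f a z" using z' hyp iS by simp
      have "Inr (u, z') \<in> C i" using z' assms(6) HtV unfolding A_def C_def corona_V_def by auto
      moreover have "gdist ?E (Inr (u, b)) (Inr (u, z')) \<le> gdist ?E (Inr (u, a)) w"
        using dX le z z' ab unfolding A_def by auto
      ultimately show ?thesis by blast
    qed
    have CN: "{z \<in> ?VJ. c' z = r + 1} = {None}" using c'le VJ by (force simp: c'_def)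
    have CJ: "{z \<in> ?VJ. c' z = h i} = Some ` A i" if "i \<in> S" for i
    proof -
      have "h i \<in> {1..r}" using that himg by auto
      note hi = this
      show ?thesis
      proof (intro set_eqI iffI)
        fix z assume "z \<in> {z \<in> ?VJ. c' z = h i}"
        then obtain w where w: "z = Some w" "w \<in> Ht" "h (c (Inr (u, w))) = h i"
          using hi VJ by (auto simp: c'_def)
        hence "c (Inr (u, w)) = i" using inj_onD[OF hinj] cX that by blast
        thus "z \<in> Some ` A i" using w unfolding A_def by auto
      next
        fix z assume "z \<in> Some ` A i"
        thus "z \<in> {z \<in> ?VJ. c' z = h i}" using VJ unfolding A_def c'_def by auto
      qed
    qed
    have sJ: "setdist ?EJ (Some a) {z \<in> ?VJ. c' z = h i} = Min (f a ` A i)" if "a \<in> Ht" "i \<in> S" for a i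
    proof -
      have "(\<lambda>z. gdist ?EJ (Some a) z) ` (Some ` A i) = f a ` A i"
        unfolding image_image using dJ that unfolding A_def by (auto intro: image_cong)
      thus ?thesis unfolding setdist_def CJ[OF that(2)] by simp
    qed
    show "inj_on (color_code ?VJ ?EJ (r + 1) c') ?VJ"
    proof (rule inj_onI)
      fix x y assume xV: "x \<in> ?VJ" and yV: "y \<in> ?VJ"
        and eq: "color_code ?VJ ?EJ (r+1) c' x = color_code ?VJ ?EJ (r+1) c' y"
      hence eqj: "\<And>j. 1 \<le> j \<Longrightarrow> j \<le> r+1 \<Longrightarrow> setdist ?EJ x {z\<in>?VJ. c' z = j} = setdist ?EJ y {z\<in>?VJ. c' z = j}"
        by (simp add: code_eq_iff)
      have sN: "setdist ?EJ None {z\<in>?VJ. c' z = r+1} = 0" unfolding setdist_def CN by (simp add: gdist_refl)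
      have sS: "setdist ?EJ (Some a) {z\<in>?VJ. c' z = r+1} = 1" if "a \<in> Ht" for a
        unfolding setdist_def CN using that by (simp add: dJN)
      have last: "setdist ?EJ x {z\<in>?VJ. c' z = r+1} = setdist ?EJ y {z\<in>?VJ. c' z = r+1}"
        using eqj by simp
      show "x = y"
      proof (cases x; cases y)
        fix a b assume xy: "x = Some a" "y = Some b"
        have ab: "a \<in> Ht" "b \<in> Ht" using xV yV xy VJ by auto
        have hyp: "Min (f a ` A i) = Min (f b ` A i)" if "i \<in> S" for i
        proof -
          have "h i \<in> {1..r}" using that himg by auto
          hence "setdist ?EJ x {z\<in>?VJ. c' z = h i} = setdist ?EJ y {z\<in>?VJ. c' z = h i}"
            using eqj by auto
          thus ?thesis using sJ ab that xy by simp
        qed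
        have hyp': "Min (f b ` A i) = Min (f a ` A i)" if "i \<in> S" for i using hyp[OF that] by simp
        have "color_code ?V ?E m c (Inr (u, a)) = color_code ?V ?E m c (Inr (u, b))"
          unfolding code_eq_iff
        proof (intro allI impI)
          fix i assume i: "1 \<le> i \<and> i \<le> m"
          hence "i \<in> c ` ?V" using loc1 by auto
          then obtain z where "z \<in> ?V" "c z = i" by blast
          hence ne: "C i \<noteq> {}" unfolding C_def by blast
          have fi: "finite (C i)" using finV unfolding C_def by auto
          have "Min ((\<lambda>w. gdist ?E (Inr (u, a)) w) ` C i) = Min ((\<lambda>w. gdist ?E (Inr (u, b)) w) ` C i)"
          proof (rule Min_eq_dom[OF fi fi ne ne])
            fix w assume "w \<in> C i"
            thus "\<exists>w'\<in>C i. gdist ?E (Inr (u, b)) w' \<le> gdist ?E (Inr (u, a)) w" by (intro dom ab hyp)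
          next
            fix w assume "w \<in> C i"
            thus "\<exists>w'\<in>C i. gdist ?E (Inr (u, a)) w' \<le> gdist ?E (Inr (u, b)) w" by (intro dom ab hyp')
          qed
          thus "setdist ?E (Inr (u, a)) {z \<in> ?V. c z = i} = setdist ?E (Inr (u, b)) {z \<in> ?V. c z = i}"
            unfolding setdist_def C_def by simp
        qed
        moreover have "Inr (u, a) \<in> ?V" "Inr (u, b) \<in> ?V" using ab HtV assms(6) unfolding corona_V_def by auto
        ultimately have "Inr (u, a) = (Inr (u, b) :: 'a + 'a \<times> 'b)" using loc3 by (auto dest: inj_onD)
        thus ?thesis using xy by simp
      qed (use xV yV VJ last sN sS in auto)
    qed
  qed
  hence "locating_chromatic_number ?VJ ?EJ \<le> r + 1"
    unfolding locating_chromatic_number_def by (intro Least_le) blast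
  thus ?thesis unfolding r_def S_def X_def by linarith
qed

end
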